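(* Let $G$ be a Polish group. Then the family of Haar meager subsets of $G$ is a $\sigma$-ideal, i.e. every subset of a Haar meager set is Haar meager and the union of countably many Haar meager sets is Haar meager.
   Context: Let $G$ be a Polish group (not necessarily abelian). A set $A\subseteq G$ is called Haar meager if there exist a Borel set $B\subseteq G$ with $A\subseteq B$, a compact metric space $K$, and a continuous map $f\colon K\to G$ such that $f^{-1}(gBh)$ is meager in $K$ for every $g,h\in G$. *)

theory Defs
  imports "HOL-Analysis.Analysis"
begin

definition nowhere_dense_in :: "'a topology \<Rightarrow> 'a set \<Rightarrow> bool" where
  "nowhere_dense_in X S \<longleftrightarrow> S \<subseteq> topspace X \<and> X interior_of (X closure_of S) = {}"

definition meager_in :: "'a topology \<Rightarrow> 'a set \<Rightarrow> bool" where
  "meager_in X S \<longleftrightarrow>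
     (\<exists>\<F>. countable \<F> \<and> (\<forall>N\<in>\<F>. nowhere_dense_in X N) \<and> S = \<Union>\<F>)"

text \<open>Haar meager sets in a Polish group (written additively, not necessarily abelian).
  The compact metric space K is represented as a nonempty compact subset of the
  Hilbert-cube-containing space nat => real (product topology); every compact
  metric space is homeomorphic to such a set.\<close>

definition haar_meager :: "'g::{polish_space, topological_group_add} set \<Rightarrow> bool" where
  "haar_meager A \<longleftrightarrow>
     (\<exists>B. B \<in> sets borel \<and> A \<subseteq> B \<and>
       (\<exists>(K :: (nat \<Rightarrow> real) set) (f :: (nat \<Rightarrow> real) \<Rightarrow> 'g).
          compact K \<and> K \<noteq> {} \<and> continuous_on K f \<and>
          (\<forall>g h. meager_in (subtopology euclidean K)
                    {x \<in> K. f x \<in> (\<lambda>b. g + b + h) ` B})))"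

end

theory Submission
  imports Defs
begin


lemma nd_subset: "nowhere_dense_in X N \<Longrightarrow> S \<subseteq> N \<Longrightarrow> nowhere_dense_in X S"
  unfolding nowhere_dense_in_def
  by (metis closure_of_mono interior_of_mono subset_empty subset_trans)

lemma meager_subset: "meager_in X M \<Longrightarrow> S \<subseteq> M \<Longrightarrow> meager_in X S"
proof -
  assume "meager_in X M" "S \<subseteq> M"
  then obtain F where F: "countable F" "\<forall>N\<in>F. nowhere_dense_in X N" "M = \<Union>F"
    unfolding meager_in_def by blast
  show ?thesis unfolding meager_in_def
    apply (rule exI[of _ "(\<lambda>N. N \<inter> S) ` F"])
    using F \<open>S \<subseteq> M\<close> by (auto intro: nd_subset)
qed

lemma meager_empty: "meager_in X {}"
  unfolding meager_in_def by (rule exI[of _ "{}"]) auto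

lemma meager_UN:
  assumes "\<And>n::nat. meager_in X (M n)" shows "meager_in X (\<Union>n. M n)"
proof -
  obtain F where F: "\<And>n. countable (F n) \<and> (\<forall>N\<in>F n. nowhere_dense_in X N) \<and> M n = \<Union>(F n)"
    using assms unfolding meager_in_def by metis
  show ?thesis unfolding meager_in_def
    apply (rule exI[of _ "\<Union>n. F n"])
    using F by auto
qed

lemma meager_Un:
  assumes "meager_in X M1" "meager_in X M2" shows "meager_in X (M1 \<union> M2)"
proof -
  have eq: "M1 \<union> M2 = (\<Union>n::nat. if n = 0 then M1 else M2)" by (auto split: if_splits)
  show ?thesis unfolding eq by (rule meager_UN) (simp add: assms)
qed

lemma meager_closed_cover:
  fixes X :: "'a topology"
  assumes "meager_in X M"
  shows "\<exists>C :: nat \<Rightarrow> 'a set. (\<forall>j. closedin X (C j) \<and> X interior_of (C j) = {}) \<and>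
    M \<subseteq> (\<Union>j. C j)"
proof -
  obtain F where F: "countable F" "\<forall>N\<in>F. nowhere_dense_in X N" "M = \<Union>F"
    using assms unfolding meager_in_def by blast
  define G where "G = insert {} ((\<lambda>N. X closure_of N) ` F)"
  have "countable G" "G \<noteq> {}" using F by (auto simp: G_def)
  define C where "C = from_nat_into G"
  have C: "G = range C" using \<open>countable G\<close> \<open>G \<noteq> {}\<close> by (simp add: C_def range_from_nat_into)
  have cj: "closedin X (C j) \<and> X interior_of (C j) = {}" for j
  proof -
    have "C j \<in> G" using C by auto
    then consider "C j = {}" | N where "N \<in> F" "C j = X closure_of N" unfolding G_def by blast
    then show ?thesis
    proof cases
      case 1 then show ?thesis by simp
    next
      case 2 then show ?thesis using F(2) unfolding nowhere_dense_in_def by simp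
    qed
  qed
  have "M \<subseteq> (\<Union>j. C j)"
  proof
    fix x assume "x \<in> M"
    then obtain N where N: "N \<in> F" "x \<in> N" using F by blast
    have "N \<subseteq> topspace X" using F(2) N(1) unfolding nowhere_dense_in_def by blast
    then have "x \<in> X closure_of N" using closure_of_subset[of N X] N(2) by blast
    moreover have "X closure_of N \<in> range C" using N C unfolding G_def by blast
    ultimately show "x \<in> (\<Union>j. C j)" by blast
  qed
  then show ?thesis using cj by blast
qed

lemma closed_nd: "closedin X C \<Longrightarrow> X interior_of C = {} \<Longrightarrow> nowhere_dense_in X C"
  unfolding nowhere_dense_in_def by (simp add: closure_of_closedin closedin_subset)

lemma Baire_compact:
  fixes K :: "'a::metric_space set"
  assumes "compact K" "openin (top_of_set K) U" "U \<subseteq> M" "meager_in (top_of_set K) M"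
  shows "U = {}"
proof -
  obtain C :: "nat \<Rightarrow> _" where C: "\<forall>j. closedin (top_of_set K) (C j) \<and> (top_of_set K) interior_of (C j) = {}"
    "M \<subseteq> (\<Union>j. C j)" using meager_closed_cover[OF assms(4)] by blast
  have "compact_space (top_of_set K)" using assms(1) by (simp add: compact_space_subtopology)
  then have l: "locally_compact_space (top_of_set K)" by (rule compact_imp_locally_compact_space)
  have "metrizable_space (top_of_set K)" by (intro metrizable_space_subtopology metrizable_space_euclidean)
  then have r: "regular_space (top_of_set K)" by (rule metrizable_imp_regular_space)
  note sp = l r
  have "(top_of_set K) interior_of \<Union>(range C) = {}"
    by (rule Baire_category_alt) (use sp C in auto)
  moreover have "U \<subseteq> \<Union>(range C)" using assms(3) C(2) by blast
  then have "U \<subseteq> (top_of_set K) interior_of \<Union>(range C)"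
    using assms(2) by (rule interior_of_maximal)
  ultimately show ?thesis by auto
qed


definition BP :: "'a topology \<Rightarrow> 'a set \<Rightarrow> bool" where
  "BP X S \<longleftrightarrow> S \<subseteq> topspace X \<and> (\<exists>U. openin X U \<and> meager_in X ((S - U) \<union> (U - S)))"

lemma frontier_nd:
  assumes "openin X U" shows "nowhere_dense_in X (X closure_of U - U)"
proof (rule closed_nd)
  show "closedin X (X closure_of U - U)" using assms by (simp add: closedin_diff)
  define W where "W = X interior_of (X closure_of U - U)"
  have oO: "openin X W" unfolding W_def by simp
  have "W \<subseteq> X closure_of U - U" unfolding W_def by (rule interior_of_subset)
  then have "W \<inter> U = {}" by blast
  then have "W \<inter> X closure_of U = {}" using openin_Int_closure_of_eq_empty[OF oO] by blast
  with \<open>W \<subseteq> X closure_of U - U\<close> show "X interior_of (X closure_of U - U) = {}"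
    unfolding W_def by blast
qed

lemma nd_meager: "nowhere_dense_in X N \<Longrightarrow> meager_in X N"
  unfolding meager_in_def by (rule exI[of _ "{N}"]) auto

lemma BP_open: "openin X S \<Longrightarrow> BP X S"
  unfolding BP_def using meager_empty openin_subset by fastforce

lemma BP_compl:
  assumes "BP X S" shows "BP X (topspace X - S)"
proof -
  obtain U where U: "openin X U" "meager_in X ((S - U) \<union> (U - S))" and S: "S \<subseteq> topspace X"
    using assms unfolding BP_def by blast
  define U' where "U' = topspace X - X closure_of U"
  have oU': "openin X U'" unfolding U'_def by (simp add: openin_diff)
  have sub: "((topspace X - S) - U') \<union> (U' - (topspace X - S)) \<subseteq>
      ((S - U) \<union> (U - S)) \<union> (X closure_of U - U)"
    unfolding U'_def using S closure_of_subset[OF openin_subset[OF U(1)]] by auto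
  have "meager_in X (((S - U) \<union> (U - S)) \<union> (X closure_of U - U))"
    by (rule meager_Un[OF U(2) nd_meager[OF frontier_nd[OF U(1)]]])
  then have "meager_in X (((topspace X - S) - U') \<union> (U' - (topspace X - S)))"
    using sub by (rule meager_subset)
  then show ?thesis unfolding BP_def using oU' by blast
qed

lemma BP_UN:
  assumes "\<And>n::nat. BP X (S n)" shows "BP X (\<Union>n. S n)"
proof -
  have "\<forall>n. \<exists>U. openin X U \<and> meager_in X ((S n - U) \<union> (U - S n))"
    using assms unfolding BP_def by blast
  then obtain U where U: "\<And>n. openin X (U n)" "\<And>n. meager_in X ((S n - U n) \<union> (U n - S n))"
    by metis
  have sub: "((\<Union>n. S n) - (\<Union>n. U n)) \<union> ((\<Union>n. U n) - (\<Union>n. S n)) \<subseteq>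
     (\<Union>n. (S n - U n) \<union> (U n - S n))" by blast
  have "meager_in X (\<Union>n. (S n - U n) \<union> (U n - S n))" using U(2) by (rule meager_UN)
  then have "meager_in X (((\<Union>n. S n) - (\<Union>n. U n)) \<union> ((\<Union>n. U n) - (\<Union>n. S n)))"
    using sub by (rule meager_subset)
  moreover have "openin X (\<Union>n. U n)" using U(1) by blast
  moreover have "(\<Union>n. S n) \<subseteq> topspace X" using assms unfolding BP_def by blast
  ultimately show ?thesis unfolding BP_def by blast
qed

lemma BP_borel:
  fixes f :: "'a::topological_space \<Rightarrow> 'b::topological_space"
  assumes "continuous_on K f" "S \<in> sets borel"
  shows "BP (top_of_set K) {x\<in>K. f x \<in> S}"
proof -
  have "S \<in> sigma_sets UNIV {S. open S}" using assms(2) by (simp add: sets_borel)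
  then show ?thesis
  proof (induction rule: sigma_sets.induct)
    case (Basic a)
    then have "openin (top_of_set K) {x\<in>K. f x \<in> a}"
      using assms(1) continuous_openin_preimage_gen[of K f a] by (auto simp: vimage_def Int_def)
    then show ?case by (rule BP_open)
  next
    case Empty
    show ?case using BP_open[of "top_of_set K" "{}"] by simp
  next
    case (Compl a)
    have "{x\<in>K. f x \<in> UNIV - a} = topspace (top_of_set K) - {x\<in>K. f x \<in> a}" by auto
    then show ?case using BP_compl[OF Compl.IH] by simp
  next
    case (Union a)
    have "{x\<in>K. f x \<in> \<Union>(range a)} = (\<Union>n. {x\<in>K. f x \<in> a n})" by auto
    then show ?case using BP_UN[OF Union.IH] by simp
  qed
qed


lemma nd_restrict:
  fixes K :: "'a::topological_space set"
  assumes K: "closed K" and U: "openin (top_of_set K) U" and N: "nowhere_dense_in (top_of_set K) N"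
  shows "nowhere_dense_in (top_of_set (closure U)) (U \<inter> N)"
proof -
  have UK: "U \<subseteq> K" using openin_subset[OF U] by simp
  have NK: "N \<subseteq> K" using N unfolding nowhere_dense_in_def by simp
  have e1: "closure U \<inter> (U \<inter> N) = U \<inter> N" using closure_subset by blast
  have cl: "(top_of_set (closure U)) closure_of (U \<inter> N) = closure U \<inter> closure (U \<inter> N)"
    by (simp add: closure_of_subtopology e1)
  have e2: "K \<inter> N = N" using NK by blast
  have clN: "(top_of_set K) closure_of N = K \<inter> closure N"
    by (simp add: closure_of_subtopology e2)
  have intN: "(top_of_set K) interior_of (K \<inter> closure N) = {}"
    using N clN unfolding nowhere_dense_in_def by simp
  obtain O2 where O2: "open O2" "U = K \<inter> O2" using U by (auto simp: openin_open)
  have "(top_of_set (closure U)) interior_of (closure U \<inter> closure (U \<inter> N)) = {}"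
  proof (rule ccontr)
    define W where "W = (top_of_set (closure U)) interior_of (closure U \<inter> closure (U \<inter> N))"
    assume "\<not> ?thesis"
    then obtain x where x: "x \<in> W" unfolding W_def by blast
    have "openin (top_of_set (closure U)) W" unfolding W_def by simp
    then obtain O1 where O1: "open O1" "W = closure U \<inter> O1" by (auto simp: openin_open)
    have Wsub: "W \<subseteq> closure U \<inter> closure (U \<inter> N)" unfolding W_def by (rule interior_of_subset)
    have "x \<in> closure U" "x \<in> O1" using x O1 by auto
    then have ne: "O1 \<inter> U \<noteq> {}" using open_Int_closure_eq_empty[OF O1(1), of U] by blast
    have oV: "openin (top_of_set K) (O1 \<inter> U)"
      unfolding openin_open using O1(1) O2 by (intro exI[of _ "O1 \<inter> O2"]) auto
    have "O1 \<inter> U \<subseteq> W" using O1 closure_subset by blast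
    also have "\<dots> \<subseteq> closure N" using Wsub closure_mono[of "U \<inter> N" N] by blast
    finally have "O1 \<inter> U \<subseteq> K \<inter> closure N" using UK by blast
    then have "O1 \<inter> U \<subseteq> (top_of_set K) interior_of (K \<inter> closure N)"
      using oV by (rule interior_of_maximal)
    with ne intN show False by blast
  qed
  then show ?thesis unfolding nowhere_dense_in_def cl using closure_subset by auto
qed

lemma meager_restrict:
  fixes K :: "'a::topological_space set"
  assumes K: "closed K" and U: "openin (top_of_set K) U" and M: "meager_in (top_of_set K) M"
  shows "meager_in (top_of_set (closure U)) (closure U \<inter> M)"
proof -
  obtain F where F: "countable F" "\<forall>N\<in>F. nowhere_dense_in (top_of_set K) N" "M = \<Union>F"
    using M unfolding meager_in_def by blast
  define G where "G = insert (closure U - U) ((\<lambda>N. U \<inter> N) ` F)"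
  have UK: "U \<subseteq> K" using openin_subset[OF U] by simp
  obtain O2 where O2: "open O2" "U = K \<inter> O2" using U by (auto simp: openin_open)
  have TK: "closure U \<subseteq> K" using closure_minimal[OF UK K] .
  have "U = closure U \<inter> O2" using O2(2) TK closure_subset[of U] by blast
  then have oU: "openin (top_of_set (closure U)) U"
    unfolding openin_open using O2(1) by (intro exI[of _ O2]) simp
  have e1: "closure U \<inter> U = U" using closure_subset by blast
  have "(top_of_set (closure U)) closure_of U = closure U"
    by (simp add: closure_of_subtopology e1)
  then have nd1: "nowhere_dense_in (top_of_set (closure U)) (closure U - U)"
    using frontier_nd[OF oU] by simp
  have "meager_in (top_of_set (closure U)) (\<Union>G)"
    unfolding meager_in_def
    apply (rule exI[of _ G])
    using F nd1 nd_restrict[OF K U] unfolding G_def by auto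
  moreover have "closure U \<inter> M \<subseteq> \<Union>G" unfolding G_def F(3) by blast
  ultimately show ?thesis by (rule meager_subset)
qed

definition wit :: "'g::{metric_space, topological_group_add} set \<Rightarrow> (nat \<Rightarrow> real) set \<Rightarrow> ((nat \<Rightarrow> real) \<Rightarrow> 'g) \<Rightarrow> bool" where
  "wit B K f \<longleftrightarrow> compact K \<and> K \<noteq> {} \<and> continuous_on K f \<and>
     (\<forall>g h. meager_in (top_of_set K) {x \<in> K. f x \<in> (\<lambda>b. g + b + h) ` B})"

lemma grp_shift:
  fixes a y g h :: "'g::group_add"
  shows "(-a + y \<in> (\<lambda>b. g + b + h) ` B) \<longleftrightarrow> (y \<in> (\<lambda>b. (a + g) + b + h) ` B)"
proof -
  have "(-a + y = g + b + h) \<longleftrightarrow> (y = (a + g) + b + h)" for b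
    by (metis add.assoc add_minus_cancel minus_add_cancel)
  then show ?thesis by blast
qed

lemma wit_shrink:
  fixes B :: "'g::{metric_space, topological_group_add} set"
  assumes w: "wit B K f" and V: "open V" "0 \<in> V"
  shows "\<exists>K' f'. wit B K' f' \<and> f' ` K' \<subseteq> V"
proof -
  have K: "compact K" "K \<noteq> {}" "continuous_on K f"
    and mg: "\<And>g h. meager_in (top_of_set K) {x \<in> K. f x \<in> (\<lambda>b. g + b + h) ` B}"
    using w unfolding wit_def by auto
  obtain x0 where x0: "x0 \<in> K" using K(2) by blast
  define f1 where "f1 = (\<lambda>x. - f x0 + f x)"
  have cf1: "continuous_on K f1" unfolding f1_def by (intro continuous_intros K(3))
  obtain r where r: "r > 0" "cball 0 r \<subseteq> V" using V open_contains_cball by blast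
  define U where "U = K \<inter> f1 -` ball 0 r"
  have oU: "openin (top_of_set K) U" unfolding U_def by (rule continuous_openin_preimage_gen[OF cf1 open_ball])
  have cK: "closed K" using K(1) by (rule compact_imp_closed)
  have UK: "U \<subseteq> K" unfolding U_def by blast
  have TK: "closure U \<subseteq> K" using closure_minimal[OF UK cK] .
  have x0U: "x0 \<in> U" unfolding U_def f1_def using x0 r by simp
  have cT: "compact (closure U)"
  proof -
    have "compact (K \<inter> closure U)" using K(1) by (rule compact_Int_closed) simp
    moreover have "K \<inter> closure U = closure U" using TK by blast
    ultimately show ?thesis by simp
  qed
  have cf1T: "continuous_on (closure U) f1" using cf1 TK by (rule continuous_on_subset)
  have "f1 ` U \<subseteq> cball 0 r" unfolding U_def by auto
  then have imT: "f1 ` closure U \<subseteq> cball 0 r"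
    by (rule image_closure_subset[OF cf1T closed_cball])
  have mT: "meager_in (top_of_set (closure U)) {x \<in> closure U. f1 x \<in> (\<lambda>b. g + b + h) ` B}" for g h
  proof -
    have "{x \<in> closure U. f1 x \<in> (\<lambda>b. g + b + h) ` B} =
        closure U \<inter> {x \<in> K. f x \<in> (\<lambda>b. (f x0 + g) + b + h) ` B}"
      using TK unfolding f1_def grp_shift by blast
    then show ?thesis using meager_restrict[OF cK oU mg] by simp
  qed
  show ?thesis
    apply (rule exI[of _ "closure U"], rule exI[of _ f1])
    unfolding wit_def using cT x0U closure_subset cf1T mT imT r by blast
qed

lemma nbhd:
  fixes C :: "'g::{metric_space, topological_group_add} set"
  assumes C: "compact C" and e: "e > 0"
  shows "\<exists>d>0. \<forall>a\<in>C. \<forall>v. dist v 0 < d \<longrightarrow> dist (a + v) a < e"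
proof (rule ccontr)
  assume "\<not> ?thesis"
  then have "\<forall>k::nat. \<exists>p. fst p \<in> C \<and> dist (snd p) 0 < inverse (real (Suc k)) \<and> e \<le> dist (fst p + snd p) (fst p)"
    by (metis fst_conv snd_conv inverse_positive_iff_positive of_nat_0_less_iff zero_less_Suc not_le)
  then obtain p where p: "\<And>k. fst (p k) \<in> C" "\<And>k. dist (snd (p k)) 0 < inverse (real (Suc k))"
    "\<And>k. e \<le> dist (fst (p k) + snd (p k)) (fst (p k))"
    by metis
  define a where "a = (\<lambda>k. fst (p k))"
  define v where "v = (\<lambda>k. snd (p k))"
  have "seq_compact C" using C by (rule compact_imp_seq_compact)
  then obtain l r where lr: "l \<in> C" "strict_mono r" "(a \<circ> r) \<longlonglongrightarrow> l"
    using p(1) unfolding seq_compact_def a_def by metis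
  have "(\<lambda>k. dist (v k) 0) \<longlonglongrightarrow> 0"
  proof (rule Lim_null_comparison[OF _ LIMSEQ_inverse_real_of_nat])
    show "\<forall>\<^sub>F k in sequentially. norm (dist (v k) 0) \<le> inverse (real (Suc k))"
    proof (rule always_eventually, rule allI)
      fix k
      have "dist (v k) 0 < inverse (real (Suc k))" using p(2) unfolding v_def .
      then show "norm (dist (v k) 0) \<le> inverse (real (Suc k))" by simp
    qed
  qed
  then have "v \<longlonglongrightarrow> 0" by (rule tendsto_dist_iff[THEN iffD2])
  then have "(v \<circ> r) \<longlonglongrightarrow> 0" using lr(2) by (rule LIMSEQ_subseq_LIMSEQ)
  then have "(\<lambda>k. (a \<circ> r) k + (v \<circ> r) k) \<longlonglongrightarrow> l + 0" using lr(3) by (intro tendsto_add)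
  then have "(\<lambda>k. dist ((a \<circ> r) k + (v \<circ> r) k) ((a \<circ> r) k)) \<longlonglongrightarrow> dist (l + 0) l"
    using lr(3) by (intro tendsto_dist)
  moreover have "\<exists>N. \<forall>n\<ge>N. e \<le> dist ((a \<circ> r) n + (v \<circ> r) n) ((a \<circ> r) n)"
    using p(3) unfolding a_def v_def by auto
  ultimately have "e \<le> dist (l + 0) l" by (rule LIMSEQ_le_const)
  then show False using e by simp
qed


definition blk :: "nat \<Rightarrow> (nat \<Rightarrow> real) \<Rightarrow> (nat \<Rightarrow> real)" where
  "blk n y = (\<lambda>i. y (prod_encode (n, i)))"
definition upd :: "nat \<Rightarrow> (nat \<Rightarrow> real) \<Rightarrow> (nat \<Rightarrow> real) \<Rightarrow> (nat \<Rightarrow> real)" where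
  "upd n y z = (\<lambda>m. if fst (prod_decode m) = n then z (snd (prod_decode m)) else y m)"
definition KP :: "(nat \<Rightarrow> (nat \<Rightarrow> real) set) \<Rightarrow> (nat \<Rightarrow> real) set" where
  "KP Ks = {y. \<forall>n. blk n y \<in> Ks n}"

lemma blk_upd_same [simp]: "blk n (upd n y z) = z"
  unfolding blk_def upd_def by simp

lemma blk_upd_other [simp]: "m \<noteq> n \<Longrightarrow> blk m (upd n y z) = blk m y"
  unfolding blk_def upd_def by simp

lemma upd_upd_blk [simp]: "upd n (upd n w c) (blk n w) = w"
proof
  fix m
  obtain a b where ab: "prod_decode m = (a, b)" by (cases "prod_decode m") auto
  then have m: "m = prod_encode (a, b)" by (metis prod_decode_inverse)
  show "upd n (upd n w c) (blk n w) m = w m"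
    unfolding upd_def blk_def m by simp
qed

lemma upd_blk [simp]: "upd n y (blk n y) = y"
proof
  fix m
  obtain a b where ab: "prod_decode m = (a, b)" by (cases "prod_decode m") auto
  then have m: "m = prod_encode (a, b)" by (metis prod_decode_inverse)
  show "upd n y (blk n y) m = y m"
    unfolding upd_def blk_def m by simp
qed

lemma cont_blk: "continuous_on S (blk n)"
  unfolding blk_def
  by (rule continuous_on_coordinatewise_then_product, rule continuous_on_product_then_coordinatewise[OF continuous_on_id])

lemma cont_upd1: "continuous_on S (\<lambda>y. upd n y z)"
  unfolding upd_def
  apply (rule continuous_on_coordinatewise_then_product)
  subgoal for i by (cases "fst (prod_decode i) = n")
      (simp_all add: continuous_on_product_then_coordinatewise[OF continuous_on_id] continuous_on_const)
  done

lemma cont_upd2: "continuous_on S (\<lambda>z. upd n y z)"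
  unfolding upd_def
  apply (rule continuous_on_coordinatewise_then_product)
  subgoal for i by (cases "fst (prod_decode i) = n")
      (simp_all add: continuous_on_product_then_coordinatewise[OF continuous_on_id] continuous_on_const)
  done

lemma upd_KP:
  assumes "y \<in> KP Ks" "z \<in> Ks n" shows "upd n y z \<in> KP Ks"
  unfolding KP_def
proof (intro CollectI allI)
  fix m show "blk m (upd n y z) \<in> Ks m" using assms unfolding KP_def by (cases "m = n") auto
qed

lemma blk_KP: "y \<in> KP Ks \<Longrightarrow> blk n y \<in> Ks n"
  unfolding KP_def by blast

lemma Baire_compact_family:
  fixes K :: "'a::metric_space set"
  assumes "compact K" "countable \<G>" "\<And>T. T \<in> \<G> \<Longrightarrow> closedin (top_of_set K) T \<and> (top_of_set K) interior_of T = {}"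
  shows "(top_of_set K) interior_of \<Union>\<G> = {}"
proof -
  have "compact_space (top_of_set K)" using assms(1) by (simp add: compact_space_subtopology)
  then have l: "locally_compact_space (top_of_set K)" by (rule compact_imp_locally_compact_space)
  have "metrizable_space (top_of_set K)" by (intro metrizable_space_subtopology metrizable_space_euclidean)
  then have r: "regular_space (top_of_set K)" by (rule metrizable_imp_regular_space)
  show ?thesis
  proof (rule Baire_category_alt)
    show "completely_metrizable_space (top_of_set K) \<or> locally_compact_space (top_of_set K) \<and> regular_space (top_of_set K)"
      using l r by blast
    show "countable \<G>" by (rule assms(2))
    fix T assume "T \<in> \<G>" then show "closedin (top_of_set K) T \<and> (top_of_set K) interior_of T = {}" by (rule assms(3))
  qed
qed


lemma sections_nd:
  fixes Ks :: "nat \<Rightarrow> (nat \<Rightarrow> real) set"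
  assumes N: "closedin (top_of_set (KP Ks)) N" "(top_of_set (KP Ks)) interior_of N = {}"
  shows "\<exists>\<Z>. countable \<Z> \<and> (\<forall>Z\<in>\<Z>. closedin (top_of_set (KP Ks)) Z \<and> (top_of_set (KP Ks)) interior_of Z = {})
     \<and> (\<forall>y\<in>KP Ks - \<Union>\<Z>. nowhere_dense_in (top_of_set (Ks n)) {z \<in> Ks n. upd n y z \<in> N})"
proof -
  define K where "K = KP Ks"
  define Y where "Y = Ks n"
  obtain \<B> :: "(nat \<Rightarrow> real) set set" where B: "countable \<B>" "\<And>C. C \<in> \<B> \<Longrightarrow> open C"
       "\<And>S. open S \<Longrightarrow> \<exists>U. U \<subseteq> \<B> \<and> S = \<Union>U"
    by (rule univ_second_countable) blast
  define Zb where "Zb b = \<Inter>((\<lambda>z. {y \<in> K. upd n y z \<in> N}) ` (Y \<inter> b))" for b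
  define \<Z> where "\<Z> = Zb ` {b \<in> \<B>. Y \<inter> b \<noteq> {}}"
  have NK: "N \<subseteq> K" using closedin_subset[OF N(1)] unfolding K_def by simp
  have cmK: "continuous_map (top_of_set K) (top_of_set K) (\<lambda>y. upd n y z)" if "z \<in> Y" for z
    using that unfolding K_def Y_def by (simp add: cont_upd1 Pi_iff upd_KP)
  have cmY: "continuous_map (top_of_set Y) (top_of_set K) (\<lambda>z. upd n y z)" if "y \<in> K" for y
    using that unfolding K_def Y_def by (simp add: cont_upd2 Pi_iff upd_KP)
  have closedZ: "closedin (top_of_set K) (Zb b)" if "Y \<inter> b \<noteq> {}" for b
    unfolding Zb_def
  proof (rule closedin_Inter)
    show "(\<lambda>z. {y \<in> K. upd n y z \<in> N}) ` (Y \<inter> b) \<noteq> {}" using that by blast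
    fix S assume "S \<in> (\<lambda>z. {y \<in> K. upd n y z \<in> N}) ` (Y \<inter> b)"
    then obtain z where z: "z \<in> Y" "S = {y \<in> K. upd n y z \<in> N}" by blast
    show "closedin (top_of_set K) S"
      using closedin_continuous_map_preimage[OF cmK[OF z(1)] N(1)[folded K_def]] z(2) by simp
  qed
  have intZ: "(top_of_set K) interior_of (Zb b) = {}" if bne: "Y \<inter> b \<noteq> {}" and bB: "b \<in> \<B>" for b
  proof (rule ccontr)
    define W where "W = (top_of_set K) interior_of (Zb b)"
    assume "\<not> ?thesis"
    then obtain y where y: "y \<in> W" unfolding W_def by blast
    have oW: "openin (top_of_set K) W" unfolding W_def by simp
    have WZ: "W \<subseteq> Zb b" unfolding W_def by (rule interior_of_subset)
    have yK: "y \<in> K" using openin_subset[OF oW] y by auto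
    then have byY: "blk n y \<in> Y" unfolding K_def Y_def by (rule blk_KP)
    obtain z0 where z0: "z0 \<in> Y" "z0 \<in> b" using bne by blast
    define O2 where "O2 = {w \<in> K. upd n w (blk n y) \<in> W} \<inter> {w \<in> K. blk n w \<in> b}"
    have o1: "openin (top_of_set K) {w \<in> K. upd n w (blk n y) \<in> W}"
      using openin_continuous_map_preimage[OF cmK[OF byY] oW] by simp
    have o2: "openin (top_of_set K) {w \<in> K. blk n w \<in> b}"
      using continuous_openin_preimage_gen[OF cont_blk B(2)[OF bB], of K n] by (simp add: vimage_def Int_def)
    have oO2: "openin (top_of_set K) O2" unfolding O2_def using o1 o2 by blast
    have "upd n y z0 \<in> O2" unfolding O2_def using upd_KP[of y Ks z0 n] yK z0 y
      unfolding K_def Y_def by simp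
    moreover have "O2 \<subseteq> N"
    proof
      fix w assume w: "w \<in> O2"
      then have "upd n w (blk n y) \<in> Zb b" using WZ unfolding O2_def by blast
      moreover have "blk n w \<in> Y \<inter> b" using w unfolding O2_def K_def Y_def by (auto intro: blk_KP)
      ultimately have "upd n (upd n w (blk n y)) (blk n w) \<in> N" unfolding Zb_def by blast
      then show "w \<in> N" by simp
    qed
    ultimately have "O2 \<subseteq> (top_of_set K) interior_of N" "O2 \<noteq> {}"
      using oO2 interior_of_maximal by blast+
    then show False using N(2) unfolding K_def by simp
  qed
  have secnd: "nowhere_dense_in (top_of_set Y) {z \<in> Y. upd n y z \<in> N}" if "y \<in> K - \<Union>\<Z>" for y
  proof (rule closed_nd)
    have yK: "y \<in> K" using that by blast
    show "closedin (top_of_set Y) {z \<in> Y. upd n y z \<in> N}"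
      using closedin_continuous_map_preimage[OF cmY[OF yK] N(1)[folded K_def]] by simp
    show "(top_of_set Y) interior_of {z \<in> Y. upd n y z \<in> N} = {}"
    proof (rule ccontr)
      define W where "W = (top_of_set Y) interior_of {z \<in> Y. upd n y z \<in> N}"
      assume "\<not> ?thesis"
      then obtain z where z: "z \<in> W" unfolding W_def by blast
      have "openin (top_of_set Y) W" unfolding W_def by simp
      then obtain O1 where O1: "open O1" "W = Y \<inter> O1" by (auto simp: openin_open)
      obtain U where U: "U \<subseteq> \<B>" "O1 = \<Union>U" using B(3)[OF O1(1)] by blast
      then obtain b where b: "b \<in> \<B>" "z \<in> b" "b \<subseteq> O1" using z O1(2) by blast
      have WS: "W \<subseteq> {z \<in> Y. upd n y z \<in> N}" unfolding W_def by (rule interior_of_subset)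
      have ne: "Y \<inter> b \<noteq> {}" using z b O1(2) by blast
      have "y \<in> Zb b" unfolding Zb_def using yK b(3) O1(2) WS by blast
      then have "y \<in> \<Union>\<Z>" unfolding \<Z>_def using b(1) ne by blast
      then show False using that by blast
    qed
  qed
  have "countable {b \<in> \<B>. Y \<inter> b \<noteq> {}}" using B(1) by (rule countable_subset[rotated]) blast
  then have c: "countable \<Z>" unfolding \<Z>_def by (rule countable_image)
  have p: "\<forall>Z\<in>\<Z>. closedin (top_of_set K) Z \<and> (top_of_set K) interior_of Z = {}"
  proof
    fix Z assume "Z \<in> \<Z>"
    then obtain b where b: "b \<in> \<B>" "Y \<inter> b \<noteq> {}" "Z = Zb b" unfolding \<Z>_def by blast
    show "closedin (top_of_set K) Z \<and> (top_of_set K) interior_of Z = {}"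
      unfolding b(3) using closedZ[OF b(2)] intZ[OF b(2) b(1)] by blast
  qed
  have s: "\<forall>y\<in>K - \<Union>\<Z>. nowhere_dense_in (top_of_set Y) {z \<in> Y. upd n y z \<in> N}"
    using secnd by blast
  have "\<exists>\<Z>. countable \<Z> \<and> (\<forall>Z\<in>\<Z>. closedin (top_of_set K) Z \<and> (top_of_set K) interior_of Z = {})
     \<and> (\<forall>y\<in>K - \<Union>\<Z>. nowhere_dense_in (top_of_set Y) {z \<in> Y. upd n y z \<in> N})"
    by (rule exI[of _ \<Z>], intro conjI c p s)
  then show ?thesis unfolding K_def Y_def .
qed


lemma KU:
  fixes Ks :: "nat \<Rightarrow> (nat \<Rightarrow> real) set"
  assumes Ks: "\<And>i. compact (Ks i)" and cK: "compact (KP Ks)"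
    and E: "BP (top_of_set (KP Ks)) E"
    and sec: "\<And>y. y \<in> KP Ks \<Longrightarrow> meager_in (top_of_set (Ks n)) {z \<in> Ks n. upd n y z \<in> E}"
  shows "meager_in (top_of_set (KP Ks)) E"
proof (rule ccontr)
  define K where "K = KP Ks"
  define Y where "Y = Ks n"
  assume nm: "\<not> meager_in (top_of_set (KP Ks)) E"
  obtain U where U: "openin (top_of_set K) U" "meager_in (top_of_set K) ((E - U) \<union> (U - E))"
    and EK: "E \<subseteq> K"
    using E unfolding BP_def K_def by auto
  obtain C :: "nat \<Rightarrow> _" where C: "\<forall>j. closedin (top_of_set K) (C j) \<and> (top_of_set K) interior_of (C j) = {}"
    "(E - U) \<union> (U - E) \<subseteq> (\<Union>j. C j)" using meager_closed_cover[OF U(2)] by blast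
  have Cj: "closedin (top_of_set (KP Ks)) (C j)" "(top_of_set (KP Ks)) interior_of (C j) = {}" for j
    using C(1) unfolding K_def by auto
  have ex: "\<exists>\<Z>. countable \<Z> \<and> (\<forall>Z\<in>\<Z>. closedin (top_of_set K) Z \<and> (top_of_set K) interior_of Z = {})
     \<and> (\<forall>y\<in>K - \<Union>\<Z>. nowhere_dense_in (top_of_set Y) {z \<in> Y. upd n y z \<in> C j})" for j
    unfolding K_def Y_def by (rule sections_nd[OF Cj(1) Cj(2)])
  have "\<forall>j. \<exists>\<Z>. countable \<Z> \<and> (\<forall>Z\<in>\<Z>. closedin (top_of_set K) Z \<and> (top_of_set K) interior_of Z = {})
     \<and> (\<forall>y\<in>K - \<Union>\<Z>. nowhere_dense_in (top_of_set Y) {z \<in> Y. upd n y z \<in> C j})"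
    using ex by (rule allI)
  from choice[OF this] obtain \<Z> where Z0: "\<forall>j. countable (\<Z> j) \<and> (\<forall>Z\<in>\<Z> j. closedin (top_of_set K) Z \<and> (top_of_set K) interior_of Z = {})
     \<and> (\<forall>y\<in>K - \<Union>(\<Z> j). nowhere_dense_in (top_of_set Y) {z \<in> Y. upd n y z \<in> C j})"
    by (elim exE)
  have Z: "\<And>j. countable (\<Z> j)"
    "\<And>j. \<forall>Z\<in>\<Z> j. closedin (top_of_set K) Z \<and> (top_of_set K) interior_of Z = {}"
    "\<And>j. \<forall>y\<in>K - \<Union>(\<Z> j). nowhere_dense_in (top_of_set Y) {z \<in> Y. upd n y z \<in> C j}"
    using Z0 by auto
  define ZA where "ZA = (\<Union>j. \<Z> j)"
  have "countable ZA" unfolding ZA_def using Z(1) by blast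
  then have intZA: "(top_of_set K) interior_of \<Union>ZA = {}"
    using cK Z(2) unfolding K_def ZA_def by (intro Baire_compact_family) auto
  have "U \<noteq> {}"
  proof
    assume "U = {}"
    then have "E \<subseteq> (E - U) \<union> (U - E)" by blast
    then have "meager_in (top_of_set K) E" using U(2) meager_subset by blast
    then show False using nm unfolding K_def by simp
  qed
  have "\<not> U \<subseteq> \<Union>ZA"
  proof
    assume "U \<subseteq> \<Union>ZA"
    then have "U \<subseteq> (top_of_set K) interior_of \<Union>ZA" using U(1) by (rule interior_of_maximal)
    then show False using intZA \<open>U \<noteq> {}\<close> by simp
  qed
  then obtain y where y: "y \<in> U" "y \<notin> \<Union>ZA" by blast
  have yK: "y \<in> K" using openin_subset[OF U(1)] y by auto
  have cmY: "continuous_map (top_of_set Y) (top_of_set K) (\<lambda>z. upd n y z)"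
    using cont_upd2 upd_KP yK unfolding K_def Y_def by auto
  define Uy where "Uy = {z \<in> Y. upd n y z \<in> U}"
  have oUy: "openin (top_of_set Y) Uy"
    using openin_continuous_map_preimage[OF cmY U(1)] unfolding Uy_def by simp
  have "blk n y \<in> Uy" unfolding Uy_def using y yK blk_KP unfolding K_def Y_def by auto
  then have neUy: "Uy \<noteq> {}" by blast
  have sub: "Uy \<subseteq> {z \<in> Y. upd n y z \<in> E} \<union> (\<Union>j. {z \<in> Y. upd n y z \<in> C j})"
    unfolding Uy_def using C(2) by blast
  have "meager_in (top_of_set Y) (\<Union>j. {z \<in> Y. upd n y z \<in> C j})"
  proof (rule meager_UN)
    fix j
    have "y \<in> K - \<Union>(\<Z> j)" using yK y(2) unfolding ZA_def by blast
    then show "meager_in (top_of_set Y) {z \<in> Y. upd n y z \<in> C j}"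
      using Z(3)[of j] by (blast intro: nd_meager)
  qed
  then have "meager_in (top_of_set Y) ({z \<in> Y. upd n y z \<in> E} \<union> (\<Union>j. {z \<in> Y. upd n y z \<in> C j}))"
    using sec[OF yK[unfolded K_def]] unfolding Y_def by (intro meager_Un) auto
  then have "Uy = {}" using Baire_compact[OF Ks[of n] oUy[unfolded Y_def] sub[unfolded Y_def]]
    unfolding Y_def by blast
  then show False using neUy by simp
qed


lemma grp1: fixes x g h b :: "'g::group_add" shows "(-g + x + -h = b) \<longleftrightarrow> (x = g + b + h)"
proof
  assume a: "-g + x + -h = b"
  have "g + (-g + x + -h) + h = x" by (simp add: add.assoc diff_conv_add_uminus del: add_uminus_conv_diff)
  then show "x = g + b + h" using a by simp
next
  assume "x = g + b + h" then show "-g + x + -h = b" by (simp add: add.assoc diff_conv_add_uminus del: add_uminus_conv_diff)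
qed

lemma grp2: fixes P w T g b h :: "'g::group_add"
  shows "(P + w + T = g + b + h) \<longleftrightarrow> (w = (-P + g) + b + (h + -T))"
proof
  assume a: "P + w + T = g + b + h"
  have "-P + (P + w + T) + -T = w" by (simp add: add.assoc diff_conv_add_uminus del: add_uminus_conv_diff)
  then have "w = -P + (g + b + h) + -T" using a by simp
  then show "w = (-P + g) + b + (h + -T)" by (simp add: add.assoc diff_conv_add_uminus del: add_uminus_conv_diff)
next
  assume "w = (-P + g) + b + (h + -T)" then show "P + w + T = g + b + h" by (simp add: add.assoc diff_conv_add_uminus del: add_uminus_conv_diff)
qed

lemma wit_small:
  fixes B :: "'g::{metric_space, topological_group_add} set"
  assumes w: "wit B K f" and C: "compact C" and e: "e > 0"
  shows "\<exists>K' f'. wit B K' f' \<and> (\<forall>a\<in>C. \<forall>x\<in>K'. dist (a + f' x) a < e)"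
proof -
  obtain d where d: "d > 0" "\<forall>a\<in>C. \<forall>v. dist v 0 < d \<longrightarrow> dist (a + v) a < e"
    using nbhd[OF C e] by blast
  obtain K' f' where K': "wit B K' f'" "f' ` K' \<subseteq> ball 0 d"
    using wit_shrink[OF w open_ball, of 0 d] d(1) by auto
  have "\<forall>a\<in>C. \<forall>x\<in>K'. dist (a + f' x) a < e"
  proof (intro ballI)
    fix a x assume "a \<in> C" "x \<in> K'"
    then have "dist (f' x) 0 < d" using K'(2) by (auto simp: dist_commute)
    then show "dist (a + f' x) a < e" using d(2) \<open>a \<in> C\<close> by blast
  qed
  then show ?thesis using K'(1) by blast
qed

definition step :: "(nat \<Rightarrow> 'g::{metric_space, topological_group_add} set) \<Rightarrow> nat \<Rightarrow> 'g set \<Rightarrow> ((nat \<Rightarrow> real) set \<times> ((nat \<Rightarrow> real) \<Rightarrow> 'g))" where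
  "step Bs n C = (SOME p. wit (Bs n) (fst p) (snd p) \<and> (\<forall>a\<in>C. \<forall>x\<in>fst p. dist (a + snd p x) a < (1/2)^n))"

primrec Cs :: "(nat \<Rightarrow> 'g::{metric_space, topological_group_add} set) \<Rightarrow> nat \<Rightarrow> 'g set" where
  "Cs Bs 0 = {0}"
| "Cs Bs (Suc n) = (\<lambda>p. fst p + snd (step Bs n (Cs Bs n)) (snd p)) ` (Cs Bs n \<times> fst (step Bs n (Cs Bs n)))"

definition Kk where "Kk Bs n = fst (step Bs n (Cs Bs n))"
definition ff where "ff Bs n = snd (step Bs n (Cs Bs n))"

primrec Ssum :: "(nat \<Rightarrow> 'g::{metric_space, topological_group_add} set) \<Rightarrow> nat \<Rightarrow> (nat \<Rightarrow> real) \<Rightarrow> 'g" where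
  "Ssum Bs 0 y = 0"
| "Ssum Bs (Suc m) y = Ssum Bs m y + ff Bs m (blk m y)"

lemma step_prop:
  fixes Bs :: "nat \<Rightarrow> 'g::{metric_space, topological_group_add} set"
  assumes ex: "\<exists>K f. wit (Bs n) K f" and C: "compact C"
  shows "wit (Bs n) (fst (step Bs n C)) (snd (step Bs n C)) \<and>
         (\<forall>a\<in>C. \<forall>x\<in>fst (step Bs n C). dist (a + snd (step Bs n C) x) a < (1/2)^n)"
proof -
  obtain K f where "wit (Bs n) K f" using ex by blast
  then obtain K' f' where "wit (Bs n) K' f' \<and> (\<forall>a\<in>C. \<forall>x\<in>K'. dist (a + f' x) a < (1/2)^n)"
    using wit_small[OF _ C, of "Bs n" K f "(1/2)^n"] by auto
  then have "\<exists>p. wit (Bs n) (fst p) (snd p) \<and> (\<forall>a\<in>C. \<forall>x\<in>fst p. dist (a + snd p x) a < (1/2)^n)"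
    by (intro exI[of _ "(K', f')"]) simp
  then show ?thesis unfolding step_def by (rule someI_ex)
qed

lemma construct:
  fixes Bs :: "nat \<Rightarrow> 'g::{metric_space, topological_group_add} set"
  assumes ex: "\<And>n. \<exists>K f. wit (Bs n) K f"
  shows "compact (Cs Bs n) \<and> wit (Bs n) (Kk Bs n) (ff Bs n) \<and>
         (\<forall>a\<in>Cs Bs n. \<forall>x\<in>Kk Bs n. dist (a + ff Bs n x) a < (1/2)^n)"
proof (induction n)
  case 0
  have c0: "compact (Cs Bs 0)" by simp
  have s: "wit (Bs 0) (fst (step Bs 0 (Cs Bs 0))) (snd (step Bs 0 (Cs Bs 0))) \<and>
         (\<forall>a\<in>Cs Bs 0. \<forall>x\<in>fst (step Bs 0 (Cs Bs 0)). dist (a + snd (step Bs 0 (Cs Bs 0)) x) a < (1/2)^0)"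
    by (rule step_prop[OF ex c0])
  show ?case unfolding Kk_def ff_def by (rule conjI[OF c0 s])
next
  case (Suc n)
  then have c: "compact (Cs Bs n)" and w: "wit (Bs n) (Kk Bs n) (ff Bs n)" by auto
  have cK: "compact (Kk Bs n)" and cf: "continuous_on (Kk Bs n) (ff Bs n)" using w unfolding wit_def by auto
  have "compact (Cs Bs n \<times> Kk Bs n)" using c cK by (rule compact_Times)
  moreover have "continuous_on (Cs Bs n \<times> Kk Bs n) (\<lambda>p. fst p + ff Bs n (snd p))"
  proof (rule continuous_on_add)
    show "continuous_on (Cs Bs n \<times> Kk Bs n) fst" by (rule continuous_on_fst[OF continuous_on_id])
    have "snd ` (Cs Bs n \<times> Kk Bs n) \<subseteq> Kk Bs n" by auto
    then show "continuous_on (Cs Bs n \<times> Kk Bs n) (\<lambda>p. ff Bs n (snd p))"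
      by (rule continuous_on_compose2[OF cf continuous_on_snd[OF continuous_on_id]])
  qed
  ultimately have "compact ((\<lambda>p. fst p + ff Bs n (snd p)) ` (Cs Bs n \<times> Kk Bs n))"
    by (rule compact_continuous_image[rotated])
  then have cS: "compact (Cs Bs (Suc n))" unfolding Kk_def ff_def by simp
  have s: "wit (Bs (Suc n)) (fst (step Bs (Suc n) (Cs Bs (Suc n)))) (snd (step Bs (Suc n) (Cs Bs (Suc n)))) \<and>
         (\<forall>a\<in>Cs Bs (Suc n). \<forall>x\<in>fst (step Bs (Suc n) (Cs Bs (Suc n))). dist (a + snd (step Bs (Suc n) (Cs Bs (Suc n))) x) a < (1/2)^(Suc n))"
    by (rule step_prop[OF ex cS])
  show ?case unfolding Kk_def ff_def by (rule conjI[OF cS s])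
qed


lemma grp1_img: fixes x g h :: "'g::group_add"
  shows "(-g + x + -h \<in> B) \<longleftrightarrow> (x \<in> (\<lambda>b. g + b + h) ` B)"
proof
  assume a: "-g + x + -h \<in> B"
  have "x = g + (-g + x + -h) + h" using grp1[of g x h "-g + x + -h"] by simp
  then show "x \<in> (\<lambda>b. g + b + h) ` B" using a by (rule image_eqI)
next
  assume "x \<in> (\<lambda>b. g + b + h) ` B"
  then obtain b where b: "b \<in> B" "x = g + b + h" by blast
  then have "-g + x + -h = b" using grp1[of g x h b] by simp
  then show "-g + x + -h \<in> B" using b(1) by simp
qed

definition FF where "FF Bs y = lim (\<lambda>m. Ssum Bs m y)"

context
  fixes Bs :: "nat \<Rightarrow> 'g::{polish_space, topological_group_add} set"
  assumes ex: "\<And>n. \<exists>K f. wit (Bs n) K f" and bor: "\<And>n. Bs n \<in> sets borel"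
begin

lemma wK: "wit (Bs n) (Kk Bs n) (ff Bs n)" using construct[where Bs=Bs, OF ex] by blast
lemma cK: "compact (Kk Bs n)" using wK unfolding wit_def by blast
lemma neK: "Kk Bs n \<noteq> {}" using wK unfolding wit_def by blast
lemma cfK: "continuous_on (Kk Bs n) (ff Bs n)" using wK unfolding wit_def by blast
lemma mK: "meager_in (top_of_set (Kk Bs n)) {x \<in> Kk Bs n. ff Bs n x \<in> (\<lambda>b. g + b + h) ` Bs n}"
  using wK unfolding wit_def by blast
lemma smallK: "a \<in> Cs Bs n \<Longrightarrow> x \<in> Kk Bs n \<Longrightarrow> dist (a + ff Bs n x) a < (1/2)^n"
  using construct[where Bs=Bs, OF ex] by blast

lemma KP_nonempty: "KP (Kk Bs) \<noteq> {}"
proof -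
  have "\<forall>n. \<exists>x. x \<in> Kk Bs n" using neK by blast
  then obtain p where p: "\<And>n. p n \<in> Kk Bs n" by metis
  define y where "y = (\<lambda>m. p (fst (prod_decode m)) (snd (prod_decode m)))"
  have "blk n y = p n" for n unfolding y_def blk_def by simp
  then have "y \<in> KP (Kk Bs)" unfolding KP_def using p by simp
  then show ?thesis by blast
qed

lemma KP_compact: "compact (KP (Kk Bs))"
proof -
  define R where "R m = (\<lambda>x. x (snd (prod_decode m))) ` Kk Bs (fst (prod_decode m))" for m
  have cR: "compact (R m)" for m unfolding R_def
    by (rule compact_continuous_image[OF continuous_on_product_then_coordinatewise[OF continuous_on_id] cK])
  have "compactin (product_topology (\<lambda>_. euclidean) UNIV) (PiE UNIV R)"
    using cR by (simp add: compactin_PiE)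
  then have cP: "compact (PiE UNIV R)" by (simp add: euclidean_product_topology)
  have sub: "KP (Kk Bs) \<subseteq> PiE UNIV R"
  proof
    fix y assume y: "y \<in> KP (Kk Bs)"
    show "y \<in> PiE UNIV R"
    proof (rule PiE_I)
      fix m
      obtain a b where ab: "prod_decode m = (a, b)" by (cases "prod_decode m") auto
      then have m: "m = prod_encode (a, b)" by (metis prod_decode_inverse)
      have "blk a y \<in> Kk Bs a" using y by (rule blk_KP)
      then have "blk a y b \<in> R m" unfolding R_def ab by force
      then show "y m \<in> R m" unfolding blk_def m[symmetric] .
    qed simp
  qed
  have clP: "closed (KP (Kk Bs))"
  proof -
    have "KP (Kk Bs) = (\<Inter>n. blk n -` Kk Bs n)" unfolding KP_def by auto
    moreover have "closed (blk n -` Kk Bs n)" for n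
      using cont_blk[of UNIV n] compact_imp_closed[OF cK[of n]]
      by (simp add: closed_vimage)
    ultimately show ?thesis by auto
  qed
  have "compact (PiE UNIV R \<inter> KP (Kk Bs))" using cP clP by (rule compact_Int_closed)
  moreover have "PiE UNIV R \<inter> KP (Kk Bs) = KP (Kk Bs)" using sub by blast
  ultimately show ?thesis by simp
qed

lemma Ssum_in: "y \<in> KP (Kk Bs) \<Longrightarrow> Ssum Bs m y \<in> Cs Bs m"
proof (induction m)
  case 0 then show ?case by simp
next
  case (Suc m)
  have "blk m y \<in> Kk Bs m" using Suc.prems by (rule blk_KP)
  then have "(Ssum Bs m y, blk m y) \<in> Cs Bs m \<times> fst (step Bs m (Cs Bs m))" using Suc unfolding Kk_def by simp
  moreover have "Ssum Bs (Suc m) y = (\<lambda>p. fst p + snd (step Bs m (Cs Bs m)) (snd p)) (Ssum Bs m y, blk m y)"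
    by (simp add: ff_def)
  ultimately show ?case by (subst Cs.simps) (rule rev_image_eqI, auto)
qed

lemma Ssum_step: "y \<in> KP (Kk Bs) \<Longrightarrow> dist (Ssum Bs (Suc m) y) (Ssum Bs m y) < (1/2)^m"
  using smallK[OF Ssum_in blk_KP] by simp

lemma Ssum_bound: "y \<in> KP (Kk Bs) \<Longrightarrow> dist (Ssum Bs m y) (Ssum Bs (m + k) y) \<le> 2*(1/2)^m - 2*(1/2)^(m+k)"
proof (induction k)
  case 0 then show ?case by simp
next
  case (Suc k)
  have "dist (Ssum Bs m y) (Ssum Bs (m + Suc k) y) \<le> dist (Ssum Bs m y) (Ssum Bs (m + k) y) + dist (Ssum Bs (m + k) y) (Ssum Bs (Suc (m + k)) y)"
    by (simp add: dist_triangle)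
  also have "\<dots> \<le> (2*(1/2)^m - 2*(1/2)^(m+k)) + (1/2)^(m+k)"
    using Suc Ssum_step[OF Suc.prems, of "m+k"] by (simp add: dist_commute)
  also have "\<dots> = 2*(1/2)^m - 2*(1/2)^(m + Suc k)" by simp
  finally show ?case .
qed

lemma Ssum_bound2: "y \<in> KP (Kk Bs) \<Longrightarrow> n \<ge> m \<Longrightarrow> dist (Ssum Bs m y) (Ssum Bs n y) \<le> 2*(1/2)^m"
proof -
  assume y: "y \<in> KP (Kk Bs)" and "n \<ge> m"
  then obtain k where "n = m + k" using le_Suc_ex by blast
  have "0 \<le> (1/2::real)^(m+k)" by simp
  then show ?thesis unfolding \<open>n = m + k\<close> using Ssum_bound[OF y, of m k] by linarith
qed

lemma pow_small: "e > 0 \<Longrightarrow> \<exists>M. \<forall>n\<ge>M. 2*(1/2::real)^n < e"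
proof -
  assume "e > 0"
  then have "\<forall>\<^sub>F n in sequentially. \<bar>(1/2::real)^n\<bar> < e/2"
    by (intro Archimedean_eventually_pow_inverse) auto
  then obtain N where "\<forall>n\<ge>N. \<bar>(1/2::real)^n\<bar> < e/2" unfolding eventually_sequentially by blast
  then show ?thesis by (intro exI[of _ N]) auto
qed

lemma Ssum_lim: "y \<in> KP (Kk Bs) \<Longrightarrow> (\<lambda>m. Ssum Bs m y) \<longlonglongrightarrow> FF Bs y"
proof -
  assume y: "y \<in> KP (Kk Bs)"
  have "Cauchy (\<lambda>m. Ssum Bs m y)" unfolding Cauchy_altdef2
  proof (intro allI impI)
    fix e :: real assume "e > 0"
    then obtain M where M: "\<forall>n\<ge>M. 2*(1/2::real)^n < e" using pow_small by blast
    have "\<forall>n\<ge>M. dist (Ssum Bs n y) (Ssum Bs M y) < e"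
    proof (intro allI impI)
      fix n assume "n \<ge> M"
      then have "dist (Ssum Bs M y) (Ssum Bs n y) \<le> 2*(1/2)^M" by (rule Ssum_bound2[OF y])
      moreover have "2*(1/2::real)^M < e" using M by simp
      ultimately show "dist (Ssum Bs n y) (Ssum Bs M y) < e" by (simp add: dist_commute)
    qed
    then show "\<exists>N. \<forall>n\<ge>N. dist (Ssum Bs n y) (Ssum Bs N y) < e" by blast
  qed
  then have "convergent (\<lambda>m. Ssum Bs m y)" by (rule Cauchy_convergent)
  then show ?thesis unfolding FF_def by (simp add: convergent_LIMSEQ_iff)
qed

lemma FF_bound: "y \<in> KP (Kk Bs) \<Longrightarrow> dist (Ssum Bs m y) (FF Bs y) \<le> 2*(1/2)^m"
proof -
  assume y: "y \<in> KP (Kk Bs)"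
  have "(\<lambda>n. Ssum Bs (n + m) y) \<longlonglongrightarrow> FF Bs y" using Ssum_lim[OF y] by (rule LIMSEQ_ignore_initial_segment)
  then have "(\<lambda>n. dist (Ssum Bs m y) (Ssum Bs (n + m) y)) \<longlonglongrightarrow> dist (Ssum Bs m y) (FF Bs y)"
    by (intro tendsto_intros)
  moreover have "\<exists>N. \<forall>n\<ge>N. dist (Ssum Bs m y) (Ssum Bs (n + m) y) \<le> 2*(1/2)^m"
    using Ssum_bound2[OF y] by auto
  ultimately show ?thesis by (rule LIMSEQ_le_const2)
qed

lemma Ssum_cont: "continuous_on (KP (Kk Bs)) (Ssum Bs m)"
proof (induction m)
  case 0
  have "Ssum Bs 0 = (\<lambda>y. 0)" by (rule ext) simp
  then show ?case by (simp add: continuous_on_const)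
next
  case (Suc m)
  have "Ssum Bs (Suc m) = (\<lambda>y. Ssum Bs m y + ff Bs m (blk m y))" by (rule ext) simp
  moreover have "continuous_on (KP (Kk Bs)) (\<lambda>y. ff Bs m (blk m y))"
    by (rule continuous_on_compose2[OF cfK cont_blk]) (auto intro: blk_KP)
  ultimately show ?case using Suc by (simp add: continuous_on_add)
qed

lemma FF_cont: "continuous_on (KP (Kk Bs)) (FF Bs)"
proof (rule uniform_limit_theorem)
  show "\<forall>\<^sub>F n in sequentially. continuous_on (KP (Kk Bs)) (Ssum Bs n)" using Ssum_cont by simp
  show "uniform_limit (KP (Kk Bs)) (Ssum Bs) (FF Bs) sequentially"
  proof (rule uniform_limitI)
    fix e :: real assume "e > 0"
    then obtain M where M: "\<forall>n\<ge>M. 2*(1/2::real)^n < e" using pow_small by blast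
    have "\<forall>n\<ge>M. \<forall>x\<in>KP (Kk Bs). dist (Ssum Bs n x) (FF Bs x) < e"
    proof (intro allI impI ballI)
      fix n x assume n: "n \<ge> M" and x: "x \<in> KP (Kk Bs)"
      show "dist (Ssum Bs n x) (FF Bs x) < e"
        using le_less_trans[OF FF_bound[OF x, of n] M[rule_format, OF n]] .
    qed
    then show "\<forall>\<^sub>F n in sequentially. \<forall>x\<in>KP (Kk Bs). dist (Ssum Bs n x) (FF Bs x) < e"
      unfolding eventually_sequentially by blast
  qed
  show "\<not> trivial_limit sequentially" by simp
qed

lemma Ssum_upd_le: "m \<le> n \<Longrightarrow> Ssum Bs m (upd n y z) = Ssum Bs m y"
  by (induction m) auto

lemma Ssum_upd_gt: "Ssum Bs (k + Suc n) (upd n y z) =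
   Ssum Bs n y + ff Bs n z + (-(Ssum Bs n y + ff Bs n (blk n y)) + Ssum Bs (k + Suc n) y)"
proof (induction k)
  case 0
  show ?case using Ssum_upd_le[of n n y z] by (simp add: add.assoc diff_conv_add_uminus del: add_uminus_conv_diff)
next
  case (Suc k)
  have ne: "k + Suc n \<noteq> n" by simp
  show ?case using Suc ne by (simp add: add.assoc diff_conv_add_uminus del: add_uminus_conv_diff)
qed

lemma FF_upd:
  assumes y: "y \<in> KP (Kk Bs)" and z: "z \<in> Kk Bs n"
  shows "FF Bs (upd n y z) = Ssum Bs n y + ff Bs n z + (-(Ssum Bs n y + ff Bs n (blk n y)) + FF Bs y)"
proof -
  have u: "upd n y z \<in> KP (Kk Bs)" using y z by (rule upd_KP)
  have l1: "(\<lambda>k. Ssum Bs (k + Suc n) (upd n y z)) \<longlonglongrightarrow> FF Bs (upd n y z)"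
    using Ssum_lim[OF u] by (rule LIMSEQ_ignore_initial_segment)
  have "(\<lambda>k. Ssum Bs (k + Suc n) y) \<longlonglongrightarrow> FF Bs y"
    using Ssum_lim[OF y] by (rule LIMSEQ_ignore_initial_segment)
  then have "(\<lambda>k. Ssum Bs n y + ff Bs n z + (-(Ssum Bs n y + ff Bs n (blk n y)) + Ssum Bs (k + Suc n) y))
     \<longlonglongrightarrow> Ssum Bs n y + ff Bs n z + (-(Ssum Bs n y + ff Bs n (blk n y)) + FF Bs y)"
    by (intro tendsto_add tendsto_const)
  then have l2: "(\<lambda>k. Ssum Bs (k + Suc n) (upd n y z))
     \<longlonglongrightarrow> Ssum Bs n y + ff Bs n z + (-(Ssum Bs n y + ff Bs n (blk n y)) + FF Bs y)"
    unfolding Ssum_upd_gt .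
  show ?thesis using l1 l2 by (rule LIMSEQ_unique)
qed

lemma E_BP: "BP (top_of_set (KP (Kk Bs))) {y \<in> KP (Kk Bs). FF Bs y \<in> (\<lambda>b. g + b + h) ` Bs n}"
proof -
  have cont: "continuous_on (KP (Kk Bs)) (\<lambda>y. -g + FF Bs y + -h)"
    by (intro continuous_on_add continuous_on_const FF_cont)
  have "BP (top_of_set (KP (Kk Bs))) {y \<in> KP (Kk Bs). -g + FF Bs y + -h \<in> Bs n}"
    using BP_borel[OF cont] bor by blast
  moreover have "{y \<in> KP (Kk Bs). -g + FF Bs y + -h \<in> Bs n} = {y \<in> KP (Kk Bs). FF Bs y \<in> (\<lambda>b. g + b + h) ` Bs n}"
    using grp1_img by blast
  ultimately show ?thesis by simp
qed

end


lemma grp2_img: fixes P w T g h :: "'g::group_add"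
  shows "(P + w + T \<in> (\<lambda>b. g + b + h) ` B) \<longleftrightarrow> (w \<in> (\<lambda>b. (-P + g) + b + (h + -T)) ` B)"
  by (simp only: image_iff grp2)

lemma E_meager:
  fixes Bs :: "nat \<Rightarrow> 'g::{polish_space, topological_group_add} set"
  assumes ex: "\<And>n. \<exists>K f. wit (Bs n) K f" and bor: "\<And>n. Bs n \<in> sets borel"
  shows "meager_in (top_of_set (KP (Kk Bs))) {y \<in> KP (Kk Bs). FF Bs y \<in> (\<lambda>b. g + b + h) ` Bs n}"
proof (rule KU[where n = n])
  show "compact (Kk Bs i)" for i by (rule cK[OF ex bor])
  show "compact (KP (Kk Bs))" by (rule KP_compact[OF ex bor])
  show "BP (top_of_set (KP (Kk Bs))) {y \<in> KP (Kk Bs). FF Bs y \<in> (\<lambda>b. g + b + h) ` Bs n}"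
    by (rule E_BP[OF ex bor])
  fix y assume y: "y \<in> KP (Kk Bs)"
  define P where "P = Ssum Bs n y"
  define T where "T = -(Ssum Bs n y + ff Bs n (blk n y)) + FF Bs y"
  have "{z \<in> Kk Bs n. upd n y z \<in> {y \<in> KP (Kk Bs). FF Bs y \<in> (\<lambda>b. g + b + h) ` Bs n}} =
        {z \<in> Kk Bs n. ff Bs n z \<in> (\<lambda>b. (-P + g) + b + (h + -T)) ` Bs n}"
  proof (intro Collect_cong conj_cong refl)
    fix z assume z: "z \<in> Kk Bs n"
    have u: "upd n y z \<in> KP (Kk Bs)" using y z by (rule upd_KP)
    have "FF Bs (upd n y z) = P + ff Bs n z + T" unfolding P_def T_def by (rule FF_upd[OF ex bor y z])
    then show "(upd n y z \<in> {y \<in> KP (Kk Bs). FF Bs y \<in> (\<lambda>b. g + b + h) ` Bs n}) =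
        (ff Bs n z \<in> (\<lambda>b. (-P + g) + b + (h + -T)) ` Bs n)"
      using u grp2_img[of P "ff Bs n z" T g h "Bs n"] by simp
  qed
  then show "meager_in (top_of_set (Kk Bs n)) {z \<in> Kk Bs n. upd n y z \<in> {y \<in> KP (Kk Bs). FF Bs y \<in> (\<lambda>b. g + b + h) ` Bs n}}"
    using mK[where Bs=Bs and n=n and g="-P + g" and h="h + -T", OF ex bor] by simp
qed

theorem union_haar_meager:
  fixes \<A> :: "nat \<Rightarrow> 'g::{polish_space, topological_group_add} set"
  assumes hm: "\<And>n. haar_meager (\<A> n)"
  shows "haar_meager (\<Union>n. \<A> n)"
proof -
  have "\<forall>n. \<exists>B. B \<in> sets borel \<and> \<A> n \<subseteq> B \<and> (\<exists>K f. wit B K f)"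
    using hm unfolding haar_meager_def wit_def by blast
  then obtain Bs where Bs: "\<And>n. Bs n \<in> sets borel" "\<And>n. \<A> n \<subseteq> Bs n" "\<And>n. \<exists>K f. wit (Bs n) K f"
    by metis
  have bor: "(\<Union>n. Bs n) \<in> sets borel" using Bs(1) by blast
  have sub: "(\<Union>n. \<A> n) \<subseteq> (\<Union>n. Bs n)" using Bs(2) by blast
  have mg: "meager_in (top_of_set (KP (Kk Bs))) {x \<in> KP (Kk Bs). FF Bs x \<in> (\<lambda>b. g + b + h) ` (\<Union>n. Bs n)}" for g h
  proof -
    have "{x \<in> KP (Kk Bs). FF Bs x \<in> (\<lambda>b. g + b + h) ` (\<Union>n. Bs n)} =
          (\<Union>n. {y \<in> KP (Kk Bs). FF Bs y \<in> (\<lambda>b. g + b + h) ` Bs n})" by blast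
    moreover have "meager_in (top_of_set (KP (Kk Bs))) (\<Union>n. {y \<in> KP (Kk Bs). FF Bs y \<in> (\<lambda>b. g + b + h) ` Bs n})"
      by (rule meager_UN, rule E_meager[OF Bs(3) Bs(1)])
    ultimately show ?thesis by simp
  qed
  have "compact (KP (Kk Bs))" "KP (Kk Bs) \<noteq> {}" "continuous_on (KP (Kk Bs)) (FF Bs)"
    using KP_compact[OF Bs(3) Bs(1)] KP_nonempty[OF Bs(3) Bs(1)] FF_cont[OF Bs(3) Bs(1)] by auto
  then show ?thesis unfolding haar_meager_def using bor sub mg by blast
qed

theorem theorem2p2:
  fixes A :: "'g::{polish_space, topological_group_add} set"
    and \<A> :: "nat \<Rightarrow> 'g set"
  shows "(haar_meager A \<longrightarrow> (\<forall>C. C \<subseteq> A \<longrightarrow> haar_meager C))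
       \<and> ((\<forall>n. haar_meager (\<A> n)) \<longrightarrow> haar_meager (\<Union>n. \<A> n))"
proof (intro conjI impI allI)
  fix C assume "haar_meager A" "C \<subseteq> A"
  then show "haar_meager C" unfolding haar_meager_def by (meson order_trans)
next
  assume "\<forall>n. haar_meager (\<A> n)"
  then show "haar_meager (\<Union>n. \<A> n)" by (intro union_haar_meager) blast
qed


end
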